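(* Let $x_0\in(-2,2)$, $0<\alpha<1$ and let $K\subset\{\eta\in\mathbb{C}:\operatorname{Im}\eta>0\}$ be compact. For $N,n\in\mathbb{N}$, $c_1,\dots,c_N\in\mathbb{R}$ and $\eta_1,\dots,\eta_N\in K$ put $\lambda_j=x_0+\eta_j/n^\alpha$ and $\phi^{(n)}=\frac{1}{n^\alpha}\sum_{j=1}^Nc_ja_{\lambda_j}=\sum_{k\in\mathbb{Z}}\phi^{(n)}_kz^k$. Then there exist $d_1,d_2>0$ (depending only on $x_0,\alpha,K$) such that $$|\phi^{(n)}_k|\le\frac{d_1}{n^\alpha}\left(\sum_{j=1}^N|c_j|\right)e^{-d_2|k|/n^\alpha}$$ for all $k\in\mathbb{Z}$, $n,N\in\mathbb{N}$, $\eta_j\in K$, $c_j\in\mathbb{R}$.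
   Context: For $\lambda\in\mathbb{C}\setminus[-2,2]$, $\omega(\lambda)=\frac{\lambda-\sqrt{\lambda^2-4}}{2}$, with the branch making $\omega$ analytic on $\mathbb{C}\setminus[-2,2]$ and $\omega(\lambda)=O(1/\lambda)$ as $\lambda\to\infty$ (so $|\omega(\lambda)|<1$). For $\operatorname{Im}\lambda>0$, $a_\lambda$ is the Laurent series $a_\lambda(z)=\sum_{j\in\mathbb{Z}}\operatorname{Im}\left(\frac{\omega(\lambda)^{|j|}}{\omega(\lambda)-\omega(\lambda)^{-1}}\right)z^j$. *)

theory Defs
  imports "HOL-Analysis.Analysis"
begin

text \<open>omega(lambda) = (lambda - sqrt(lambda^2 - 4))/2, with the branch of sqrt(lambda^2-4)
  analytic on C minus [-2,2] and asymptotic to lambda at infinity, written explicitly as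
  csqrt(lambda - 2) * csqrt(lambda + 2) (principal square roots).\<close>
definition omega :: "complex \<Rightarrow> complex" where
  "omega lam = (lam - csqrt (lam - 2) * csqrt (lam + 2)) / 2"

definition a_coeff :: "complex \<Rightarrow> int \<Rightarrow> real" where
  "a_coeff lam j = Im (omega lam ^ nat \<bar>j\<bar> / (omega lam - inverse (omega lam)))"

definition phi_coeff :: "real \<Rightarrow> real \<Rightarrow> nat \<Rightarrow> nat \<Rightarrow> (nat \<Rightarrow> real) \<Rightarrow> (nat \<Rightarrow> complex) \<Rightarrow> int \<Rightarrow> real" where
  "phi_coeff x0 \<alpha> n N c \<eta> k =
     (1 / real n powr \<alpha>) *
     (\<Sum>j=1..N. c j * a_coeff (complex_of_real x0 + \<eta> j / complex_of_real (real n powr \<alpha>)) k)"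

end

theory Submission imports Defs begin

lemma im_inv: "Im (inverse (z::complex)) = - Im z / (norm z)^2"
  by (simp add: cmod_power2)

lemma omega_props:
  fixes lam :: complex
  assumes "Im lam > 0"
  defines "s \<equiv> csqrt (lam - 2) * csqrt (lam + 2)"
  shows "omega lam * ((lam + s)/2) = 1" "Im (omega lam) < 0"
    "omega lam - inverse (omega lam) = - s"
    "norm s ^ 2 = norm (lam - 2) * norm (lam + 2)"
    "Im lam \<le> 1 / norm (omega lam) - norm (omega lam)"
    "norm (omega lam) < 1"
proof -
  have s2: "s^2 = (lam-2)*(lam+2)" unfolding s_def by (simp add: power_mult_distrib)
  have ims: "Im s \<ge> 0"
  proof -
    have a: "Im (csqrt (lam - 2)) \<ge> 0" "Im (csqrt (lam + 2)) \<ge> 0"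
      using assms complex_Re_le_cmod[of "lam-2"] complex_Re_le_cmod[of "lam+2"] by auto
    show ?thesis unfolding s_def using a Re_csqrt[of "lam-2"] Re_csqrt[of "lam+2"] by simp
  qed
  show om: "omega lam * ((lam + s)/2) = 1"
    unfolding omega_def s_def[symmetric]
  proof -
    have "(lam - s) / 2 * ((lam + s) / 2) = (lam^2 - s^2)/4" by (simp add: field_simps power2_eq_square)
    also have "\<dots> = 1" using s2 by (simp add: field_simps power2_eq_square)
    finally show "(lam - s) / 2 * ((lam + s) / 2) = 1" .
  qed
  hence inv: "inverse (omega lam) = (lam + s)/2" by (metis inverse_unique)
  have nz: "omega lam \<noteq> 0" using om by auto
  have ip: "Im ((lam + s)/2) > 0" using assms ims by simp
  have "Im (omega lam) = Im (inverse ((lam+s)/2))" using inv by (metis inverse_inverse_eq)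
  also have "\<dots> = - Im ((lam+s)/2) / (norm ((lam+s)/2))^2" by (rule im_inv)
  finally have imw0: "Im (omega lam) = - (Im ((lam+s)/2) / (norm ((lam+s)/2))^2)" by simp
  have nz2: "(lam+s)/2 \<noteq> 0"
  proof
    assume "(lam+s)/2 = 0"
    hence "Im ((lam+s)/2) = 0" by simp
    with ip show False by simp
  qed
  hence np: "(norm ((lam+s)/2))^2 > 0" by simp
  have "Im ((lam+s)/2) / (norm ((lam+s)/2))^2 > 0" by (rule divide_pos_pos[OF ip np])
  thus imw: "Im (omega lam) < 0" using imw0 by linarith
  show "omega lam - inverse (omega lam) = - s" unfolding inv by (simp add: omega_def s_def field_simps)
  have "norm s ^2 = norm (s^2)" by (simp add: norm_power)
  thus "norm s ^ 2 = norm (lam - 2) * norm (lam + 2)" using s2 by (simp add: norm_mult)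
  define w where "w = omega lam"
  define r where "r = norm w"
  have rpos: "r > 0" using nz r_def w_def by simp
  have lamw: "lam = w + inverse w"
    using inv unfolding w_def omega_def by (simp add: field_simps s_def)
  have "Im lam = Im w + Im (inverse w)" using lamw by simp
  also have "Im (inverse w) = - Im w / r^2" unfolding r_def by (rule im_inv)
  finally have e: "Im lam = (- Im w) * (1 / r^2 - 1)" using rpos by (simp add: field_simps)
  have iw: "- Im w \<le> r" "- Im w > 0" using abs_Im_le_cmod[of w] imw unfolding r_def w_def by auto
  have f: "1 / r^2 - 1 > 0" using e iw assms
    by (metis zero_less_mult_pos)
  have "Im lam \<le> r * (1 / r^2 - 1)" unfolding e by (rule mult_right_mono) (use iw f in auto)
  also have "\<dots> = 1 / r - r" using rpos by (simp add: field_simps power2_eq_square)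
  finally show "Im lam \<le> 1 / norm (omega lam) - norm (omega lam)" by (simp add: r_def w_def)
  have "r^2 < 1" using f rpos by (simp add: field_simps)
  thus "norm (omega lam) < 1" using power2_less_imp_less[of r 1] r_def w_def by simp
qed

lemma r_bound:
  fixes r R B :: real
  assumes "r > 0" "0 < R" "R \<le> B" "R \<le> 1 / r - r"
  shows "r \<le> exp (- R / (2 + B))"
proof -
  define u where "u = 1 / r"
  have u: "u > 0" "r = 1/u" using assms u_def by auto
  have "u - 1/u \<ge> R" using assms u by simp
  hence "u*u - R*u - 1 \<ge> 0" using u by (simp add: field_simps)
  hence u1: "u \<ge> 1 + R/2"
  proof -
    assume h: "u*u - R*u - 1 \<ge> 0"
    show ?thesis
    proof (rule ccontr)
      assume c: "\<not> u \<ge> 1 + R/2"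
      show False
      proof (cases "u \<le> R")
        case True
        hence "u*(u-R) \<le> 0" using u by (simp add: mult_nonneg_nonpos)
        thus False using h by (simp add: algebra_simps)
      next
        case False
        hence "u*(u-R) < (1+R/2)*(1-R/2)" using c u by (intro mult_strict_mono) auto
        also have "\<dots> \<le> 1" by (simp add: algebra_simps)
        finally show False using h by (simp add: algebra_simps)
      qed
    qed
  qed
  define y where "y = R / (2 + B)"
  have y: "0 < y" "y < 1" using assms by (auto simp: y_def field_simps)
  have "1 - y \<le> exp (- y)" using exp_ge_add_one_self[of "-y"] by simp
  hence "exp y \<le> 1 / (1 - y)" using y by (simp add: exp_minus field_simps)
  also have "1/(1-y) = (2+B)/(2+B-R)" using assms by (simp add: y_def field_simps)
  also have "\<dots> \<le> 1 + R/2"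
  proof -
    have "2*(2+B) \<le> (2+R)*(2+B-R)" using assms by (simp add: algebra_simps)
    thus ?thesis using assms by (simp add: field_simps)
  qed
  also have "\<dots> \<le> u" by (rule u1)
  finally have "exp y \<le> u" .
  hence "r * exp y \<le> r * u" using assms(1) by simp
  also have "r * u = 1" using u by simp
  finally have "r * exp y \<le> 1" .
  hence "r \<le> 1 / exp y" by (simp add: field_simps)
  thus ?thesis by (simp add: y_def exp_minus divide_inverse)
qed


lemma term_bound:
  fixes lam :: complex
  assumes "Im lam > 0" "\<delta> > 0" "norm (lam - 2) \<ge> \<delta>" "norm (lam + 2) \<ge> \<delta>"
    "0 < R" "R \<le> Im lam" "Im lam \<le> B"
  shows "\<bar>a_coeff lam k\<bar> \<le> (1/\<delta>) * exp (- R / (2 + B) * real_of_int \<bar>k\<bar>)"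
proof -
  define s where "s = csqrt (lam - 2) * csqrt (lam + 2)"
  note P = omega_props[OF assms(1), folded s_def]
  define r where "r = norm (omega lam)"
  have "omega lam \<noteq> 0" using P(1) by (metis mult_zero_left zero_neq_one)
  hence rpos: "r > 0" unfolding r_def by simp
  have ns: "norm s \<ge> \<delta>"
  proof -
    have "\<delta> * \<delta> \<le> norm (lam - 2) * norm (lam + 2)"
      by (rule mult_mono[OF assms(3) assms(4)]) (use assms(2) in auto)
    also have "\<dots> = norm s ^ 2" by (rule P(4)[symmetric])
    finally have "\<delta>^2 \<le> norm s ^ 2" by (simp only: power2_eq_square)
    thus ?thesis by (rule power2_le_imp_le) simp
  qed
  have ib: "Im lam \<le> 1 / r - r" using P(5) by (simp add: r_def)
  have rb: "r \<le> exp (- Im lam / (2 + B))" by (rule r_bound[OF rpos assms(1) assms(7) ib])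
  have B2: "2 + B > 0" using assms by linarith
  have "- Im lam / (2 + B) \<le> - R / (2 + B)" using assms(6) B2 by (intro divide_right_mono) auto
  hence "exp (- Im lam / (2 + B)) \<le> exp (- R / (2 + B))" by simp
  with rb have rb2: "r \<le> exp (- R / (2 + B))" by linarith
  have "\<bar>a_coeff lam k\<bar> \<le> norm (omega lam ^ nat \<bar>k\<bar> / (omega lam - inverse (omega lam)))"
    unfolding a_coeff_def by (rule abs_Im_le_cmod)
  also have "\<dots> = r ^ nat \<bar>k\<bar> / norm s" using P(3) by (simp add: r_def norm_divide norm_power)
  also have "\<dots> \<le> exp (- R / (2 + B)) ^ nat \<bar>k\<bar> / \<delta>"
  proof (rule frac_le)
    show "0 \<le> exp (- R / (2 + B)) ^ nat \<bar>k\<bar>" by simp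
    show "r ^ nat \<bar>k\<bar> \<le> exp (- R / (2 + B)) ^ nat \<bar>k\<bar>" using rpos rb2 by (intro power_mono) auto
    show "0 < \<delta>" by (rule assms(2))
    show "\<delta> \<le> norm s" by (rule ns)
  qed
  also have "exp (- R / (2 + B)) ^ nat \<bar>k\<bar> = exp (real (nat \<bar>k\<bar>) * (- R / (2 + B)))"
    by (rule exp_of_nat_mult[symmetric])
  also have "real (nat \<bar>k\<bar>) = real_of_int \<bar>k\<bar>" by simp
  finally show ?thesis by (simp add: mult.commute)
qed

theorem lemma4p1:
  fixes x0 \<alpha> :: real and K :: "complex set"
  assumes "-2 < x0" "x0 < 2" "0 < \<alpha>" "\<alpha> < 1"
    and "compact K" "K \<subseteq> {\<eta>. Im \<eta> > 0}"
  shows "\<exists>d1>0. \<exists>d2>0. \<forall>n::nat. \<forall>N::nat. \<forall>c::nat \<Rightarrow> real. \<forall>\<eta>::nat \<Rightarrow> complex. \<forall>k::int.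
           n \<ge> 1 \<longrightarrow> (\<forall>j\<in>{1..N}. \<eta> j \<in> K) \<longrightarrow>
           \<bar>phi_coeff x0 \<alpha> n N c \<eta> k\<bar>
             \<le> d1 / real n powr \<alpha> * (\<Sum>j=1..N. \<bar>c j\<bar>) * exp (- d2 * real_of_int \<bar>k\<bar> / real n powr \<alpha>)"
proof -
  obtain m where m: "m > 0" "\<forall>\<eta>\<in>K. m \<le> Im \<eta>"
  proof (cases "K = {}")
    case True thus ?thesis using that[of 1] by auto
  next
    case False
    have "continuous_on K Im" by (intro continuous_intros)
    hence "\<exists>x\<in>K. \<forall>y\<in>K. Im x \<le> Im y" using continuous_attains_inf[OF assms(5) False, of Im] by blast
    then obtain \<eta>0 where "\<eta>0 \<in> K" "\<forall>\<eta>\<in>K. Im \<eta>0 \<le> Im \<eta>" by blast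
    thus ?thesis using that[of "Im \<eta>0"] assms(6) by auto
  qed
  obtain M where M: "M > 0" "\<forall>\<eta>\<in>K. norm \<eta> \<le> M"
    using compact_imp_bounded[OF assms(5)] bounded_pos by blast
  define e where "e = 2 - \<bar>x0\<bar>"
  have e: "e > 0" using assms e_def by auto
  define \<delta> where "\<delta> = min (e/2) (m*e/(2*M))"
  have \<delta>: "\<delta> > 0" using e m M by (simp add: \<delta>_def)
  define d2 where "d2 = m / (2 + M)"
  have pos1: "1/\<delta> > 0" and pos2: "d2 > 0" using \<delta> m M by (auto simp: d2_def)
  have main: "\<bar>phi_coeff x0 \<alpha> n N c \<eta> k\<bar>
             \<le> (1/\<delta>) / real n powr \<alpha> * (\<Sum>j=1..N. \<bar>c j\<bar>) * exp (- d2 * real_of_int \<bar>k\<bar> / real n powr \<alpha>)"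
    if n: "n \<ge> 1" and \<eta>K: "\<forall>j\<in>{1..N}. \<eta> j \<in> K" for n N :: nat and c :: "nat \<Rightarrow> real" and \<eta> :: "nat \<Rightarrow> complex" and k :: int
  proof -
    define p where "p = real n powr \<alpha>"
    have p: "p \<ge> 1" using n assms(3) unfolding p_def by (simp add: ge_one_powr_ge_zero)
    have tb: "\<bar>a_coeff (complex_of_real x0 + \<eta> j / complex_of_real p) k\<bar>
              \<le> (1/\<delta>) * exp (- d2 * real_of_int \<bar>k\<bar> / p)" if j: "j \<in> {1..N}" for j
    proof -
      define z where "z = \<eta> j"
      have zK: "z \<in> K" using \<eta>K j z_def by auto
      have imz: "Im z \<ge> m" "norm z \<le> M" using zK m M by auto
      define lam where "lam = complex_of_real x0 + z / complex_of_real p"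
      have imlam: "Im lam = Im z / p" unfolding lam_def by (simp add: Im_divide_of_real)
      have imlam2: "Im lam \<ge> m / p" using imlam imz p by (simp add: divide_right_mono)
      have imlam3: "Im lam \<le> M"
      proof -
        have "Im z * 1 \<le> Im z * p" by (rule mult_left_mono) (use p imz m in auto)
        hence "Im lam \<le> Im z" using imlam p by (simp add: divide_le_eq)
        also have "\<dots> \<le> norm z" using abs_Im_le_cmod[of z] by linarith
        finally show ?thesis using imz by simp
      qed
      have nb: "norm (lam - of_real t) \<ge> \<delta>" if t: "\<bar>t\<bar> = 2" for t
      proof (cases "norm z / p \<le> e/2")
        case True
        have "norm (complex_of_real (x0 - t)) = \<bar>x0 - t\<bar>" by (rule norm_of_real)
        hence "norm (complex_of_real (x0 - t)) \<ge> e" using t assms unfolding e_def by linarith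
        moreover have "norm (z / complex_of_real p) = norm z / p" using p by (simp add: norm_divide)
        moreover have "norm (lam - of_real t) = norm (complex_of_real (x0 - t) + z / complex_of_real p)"
          by (simp add: lam_def algebra_simps)
        ultimately have "norm (lam - of_real t) \<ge> e - e/2" using True
          norm_diff_ineq[of "complex_of_real (x0 - t)" "z / complex_of_real p"] by linarith
        thus ?thesis unfolding \<delta>_def by simp
      next
        case False
        hence "p < 2 * norm z / e" using p e by (simp add: field_simps)
        also have "\<dots> \<le> 2 * M / e" using imz e by (simp add: divide_right_mono)
        finally have pl: "p < 2*M/e" .
        have "m * e / (2*M) \<le> m / p"
        proof -
          have "m * e * p \<le> m * (2*M)" using pl e m p by (simp add: field_simps)
          thus ?thesis using e m M p by (simp add: field_simps)
        qed
        also have "\<dots> \<le> Im lam" by (rule imlam2)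
        also have "\<dots> = \<bar>Im (lam - of_real t)\<bar>" using imlam imz m p by simp
        also have "\<dots> \<le> norm (lam - of_real t)" by (rule abs_Im_le_cmod)
        finally show ?thesis unfolding \<delta>_def by simp
      qed
      have n1: "norm (lam - 2) \<ge> \<delta>" using nb[of 2] by simp
      have n2: "norm (lam + 2) \<ge> \<delta>" using nb[of "-2"] by simp
      have "m / p > 0" using m p by simp
      hence pos: "Im lam > 0" using imlam2 by linarith
      have "\<bar>a_coeff lam k\<bar> \<le> (1/\<delta>) * exp (- (m/p) / (2 + M) * real_of_int \<bar>k\<bar>)"
        using term_bound[OF pos \<delta> n1 n2 _ imlam2 imlam3] m p by simp
      also have "- (m/p) / (2 + M) * real_of_int \<bar>k\<bar> = - d2 * real_of_int \<bar>k\<bar> / p"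
        by (simp add: d2_def field_simps)
      finally show ?thesis by (simp add: lam_def z_def)
    qed
    have "\<bar>phi_coeff x0 \<alpha> n N c \<eta> k\<bar> = (1/p) * \<bar>\<Sum>j=1..N. c j * a_coeff (complex_of_real x0 + \<eta> j / complex_of_real p) k\<bar>"
      unfolding phi_coeff_def p_def using p p_def by (simp add: abs_mult)
    also have "\<dots> \<le> (1/p) * (\<Sum>j=1..N. \<bar>c j\<bar> * ((1/\<delta>) * exp (- d2 * real_of_int \<bar>k\<bar> / p)))"
    proof (intro mult_left_mono order.trans[OF sum_abs] sum_mono)
      fix j assume jj: "j \<in> {1..N}"
      have "\<bar>c j\<bar> * \<bar>a_coeff (complex_of_real x0 + \<eta> j / complex_of_real p) k\<bar> \<le> \<bar>c j\<bar> * ((1/\<delta>) * exp (- d2 * real_of_int \<bar>k\<bar> / p))"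
        by (rule mult_left_mono[OF tb[OF jj]]) simp
      thus "\<bar>c j * a_coeff (complex_of_real x0 + \<eta> j / complex_of_real p) k\<bar> \<le> \<bar>c j\<bar> * ((1/\<delta>) * exp (- d2 * real_of_int \<bar>k\<bar> / p))"
        by (simp only: abs_mult)
    qed (use p in simp)
    also have "\<dots> = (1/\<delta>) / p * (\<Sum>j=1..N. \<bar>c j\<bar>) * exp (- d2 * real_of_int \<bar>k\<bar> / p)"
      unfolding sum_distrib_right[symmetric] by (simp add: field_simps)
    finally show ?thesis by (simp add: p_def)
  qed
  show ?thesis
    apply (rule exI[of _ "1/\<delta>"], rule conjI, rule pos1)
    apply (rule exI[of _ d2], rule conjI, rule pos2)
    by (intro allI impI main)
qed

end
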